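(* Consider the coordination game described in the context in which each agent $i$ observes $z_i=A-\theta+\sigma_z\xi_i$ with $\xi_i\sim\mathcal{N}(0,1)$ i.i.d. across agents, and let $\alpha_z:=1/\sigma_z$. If $\alpha_z>\sqrt{2\pi}$, then there exist multiple (at least two distinct) equilibria.
   Context: A unit mass of agents $i\in[0,1]$ each choose $a_i\in\{0,1\}$ ($a_i=1$: attack the status quo). The aggregate attack is $A=\int_0^1 a_i\,di$. The status quo has strength $\theta\in\mathbb{R}$ and is abandoned iff $A>\theta$. An attacking agent pays cost $c\in(0,1)$ and gets $1$ if the status quo is abandoned, otherwise nothing; not attacking yields $0$, so agent $i$ maximizes $a_i\,(P(A-\theta>0\mid z_i)-c)$. Agents hold an (improper) uniform prior over $\theta$ on $\mathbb{R}$. Given a conjectured (measurable) aggregate attack function $A:\mathbb{R}\to[0,1]$, the posterior of an agent with signal $z$ is $P[\theta\in S\mid z,A(\cdot)]=\int_S \phi(\alpha_z(z-A(\theta)+\theta))\,d\theta\big/\int_{\mathbb{R}}\phi(\alpha_z(z-A(\theta)+\theta))\,d\theta$, with $\phi$ the standard normal density. An equilibrium is a function $A:\mathbb{R}\to[0,1]$ such that for every $\theta$, $A(\theta)$ equals the probability (mass of agents) that an agent's signal $z=A(\theta)-\theta+\sigma_z\xi$ leads him to attack, i.e. that $P[A(\theta')-\theta'>0\mid z,A(\cdot)]\ge c$ (where $\theta'$ is the random fundamental under the posterior). *)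

theory Defs
  imports "HOL-Probability.Probability"
begin

text \<open>Posterior probability that the status quo is abandoned (A(theta') - theta' > 0),
  for an agent with signal z, noise scale sigma (alpha_z = 1/sigma), under the conjectured
  aggregate attack function A and the improper uniform prior on theta'.\<close>
definition posterior_success :: "real \<Rightarrow> (real \<Rightarrow> real) \<Rightarrow> real \<Rightarrow> real" where
  "posterior_success \<sigma> A z =
     (\<integral>t. indicator {t. A t - t > 0} t * std_normal_density ((1/\<sigma>) * (z - A t + t)) \<partial>lborel)
     / (\<integral>t. std_normal_density ((1/\<sigma>) * (z - A t + t)) \<partial>lborel)"

text \<open>Set of standard-normal noise realisations xi for which an agent, facing fundamental theta
  (signal z = A theta - theta + sigma xi), attacks.\<close>
definition attack_set :: "real \<Rightarrow> real \<Rightarrow> (real \<Rightarrow> real) \<Rightarrow> real \<Rightarrow> real set" where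
  "attack_set \<sigma> c A \<theta> = {\<xi>. posterior_success \<sigma> A (A \<theta> - \<theta> + \<sigma> * \<xi>) \<ge> c}"

definition attack_mass :: "real \<Rightarrow> real \<Rightarrow> (real \<Rightarrow> real) \<Rightarrow> real \<Rightarrow> real" where
  "attack_mass \<sigma> c A \<theta> = measure (density lborel std_normal_density) (attack_set \<sigma> c A \<theta>)"

definition is_equilibrium :: "real \<Rightarrow> real \<Rightarrow> (real \<Rightarrow> real) \<Rightarrow> bool" where
  "is_equilibrium \<sigma> c A \<longleftrightarrow>
     A \<in> borel_measurable borel \<and>
     (\<forall>\<theta>. 0 \<le> A \<theta> \<and> A \<theta> \<le> 1) \<and>
     (\<forall>\<theta>. attack_set \<sigma> c A \<theta> \<in> sets borel \<and> A \<theta> = attack_mass \<sigma> c A \<theta>)"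

end

theory Submission
  imports Defs
begin

definition NN :: "real measure" where "NN = density lborel std_normal_density"

lemma prob_NN: "prob_space NN"
  unfolding NN_def by (rule prob_space_normal_density) simp

lemma sets_NN[simp, measurable_cong]: "sets NN = sets borel"
  unfolding NN_def by simp

lemma space_NN[simp]: "space NN = UNIV"
  unfolding NN_def by simp

lemma measN:
  assumes [measurable]: "S \<in> sets borel"
  shows "measure NN S = (\<integral>x. std_normal_density x * indicator S x \<partial>lborel)"
proof -
  have "measure NN S = integral\<^sup>L NN (indicator S)" by simp
  also have "\<dots> = (\<integral>x. std_normal_density x * indicator S x \<partial>lborel)"
    unfolding NN_def by (subst integral_density) auto
  finally show ?thesis .
qed

lemma phi_le1: "std_normal_density x \<le> 1"
proof -
  have "exp (- x\<^sup>2 / 2) \<le> 1" by simp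
  moreover have "1 \<le> sqrt (2 * pi)" using pi_gt3 by simp
  ultimately have "exp (- x\<^sup>2 / 2) \<le> sqrt (2 * pi)" by linarith
  then show ?thesis unfolding std_normal_density_def
    by (simp add: divide_le_eq_1)
qed

lemma Ico_upper:
  assumes "l \<le> r"
  shows "measure NN {l..<r} \<le> r - l"
proof -
  have "measure NN {l..<r} = (\<integral>x. std_normal_density x * indicator {l..<r} x \<partial>lborel)"
    by (rule measN) simp
  also have "\<dots> \<le> (\<integral>x. indicator {l..<r} x \<partial>lborel)"
    by (intro integral_mono integrable_real_mult_indicator integrable_real_indicator)
       (auto simp: phi_le1 indicator_def assms)
  also have "\<dots> = r - l" using assms by simp
  finally show ?thesis .
qed

lemma Ico_lower:
  assumes "l \<le> r" and "\<And>x. l \<le> x \<Longrightarrow> x \<le> r \<Longrightarrow> m \<le> std_normal_density x"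
  shows "(r - l) * m \<le> measure NN {l..<r}"
proof -
  have "(r - l) * m = (\<integral>x. m * indicator {l..<r} x \<partial>lborel)"
    using assms by simp
  also have "\<dots> \<le> (\<integral>x. std_normal_density x * indicator {l..<r} x \<partial>lborel)"
    by (intro integral_mono integrable_real_mult_indicator integrable_mult_right integrable_real_indicator)
       (auto simp: assms indicator_def)
  also have "\<dots> = measure NN {l..<r}"
    by (rule measN[symmetric]) simp
  finally show ?thesis .
qed

lemma split_atLeast:
  assumes "l \<le> r"
  shows "measure NN {l..} = measure NN {l..<r} + measure NN {r..}"
proof -
  interpret prob_space NN by (rule prob_NN)
  have "{l..} = {l..<r} \<union> {r..}" using assms by auto
  then show ?thesis
    by (simp add: measure_Union ivl_disj_int)
qed



lemma not_AE_False_lborel: "\<not> (AE x in (lborel::real measure). False)"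
proof
  assume A: "AE x in (lborel::real measure). False"
  have "(AE x in (lborel::real measure). False) \<longleftrightarrow> emeasure lborel (UNIV::real set) = 0"
    by (rule AE_iff_measurable[where N=UNIV]) auto
  with A have "emeasure lborel (UNIV::real set) = 0" by simp
  moreover have "emeasure lborel {0::real..1} \<le> emeasure lborel (UNIV::real set)"
    by (intro emeasure_mono) auto
  ultimately show False by simp
qed

lemma phi_mono_sq:
  assumes "x\<^sup>2 \<le> y\<^sup>2"
  shows "std_normal_density y \<le> std_normal_density x"
  using assms unfolding std_normal_density_def by (simp add: divide_right_mono)

lemma phi_pos: "0 < std_normal_density x"
  by (rule normal_density_pos) simp

locale eqs =
  fixes \<sigma> c :: real
  assumes c0: "0 < c" and c1: "c < 1" and sg0: "0 < \<sigma>"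
    and big: "1 / \<sigma> > sqrt (2 * pi)"
begin

definition al :: real where "al = 1 / \<sigma>"

lemma al_pos: "0 < al" using sg0 by (simp add: al_def)

definition Psi :: "real \<Rightarrow> real" where "Psi u = measure NN {- al * u..}"

definition G :: "real \<Rightarrow> real" where "G u = Psi u - u"

lemma Psi_nonneg: "0 \<le> Psi u" by (simp add: Psi_def)

lemma Psi_le1: "Psi u \<le> 1"
proof -
  interpret prob_space NN by (rule prob_NN)
  show ?thesis by (simp add: Psi_def)
qed

lemma Psi_diff:
  assumes "a \<le> b"
  shows "Psi b - Psi a = measure NN {- al * b ..< - al * a}"
  using split_atLeast[of "- al * b" "- al * a"] assms al_pos
  by (simp add: Psi_def mult_left_mono)

lemma Psi_lip:
  assumes "a \<le> b"
  shows "Psi b - Psi a \<le> al * (b - a)"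
  using Psi_diff[OF assms] Ico_upper[of "- al * b" "- al * a"] assms al_pos
  by (simp add: mult_left_mono algebra_simps)

lemma Psi_mono:
  assumes "a \<le> b"
  shows "Psi a \<le> Psi b"
proof -
  have "0 \<le> measure NN {- al * b ..< - al * a}" by (rule measure_nonneg)
  then show ?thesis using Psi_diff[OF assms] by linarith
qed

lemma Psi_strict:
  assumes "a < b"
  shows "Psi a < Psi b"
proof -
  define M where "M = al * (\<bar>a\<bar> + \<bar>b\<bar>)"
  have "(- al * a - - al * b) * std_normal_density M \<le> measure NN {- al * b ..< - al * a}"
  proof (rule Ico_lower)
    show "- al * b \<le> - al * a" using assms al_pos by simp
    fix x assume x: "- al * b \<le> x" "x \<le> - al * a"
    have "\<bar>x\<bar> \<le> M"
    proof -
      have "al * (- a) \<le> al * \<bar>a\<bar>"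
        by (rule mult_left_mono) (use al_pos in auto)
      moreover have "al * b \<le> al * \<bar>b\<bar>"
        by (rule mult_left_mono) (use al_pos in auto)
      moreover have "0 \<le> al * \<bar>a\<bar>" "0 \<le> al * \<bar>b\<bar>" using al_pos by auto
      moreover have "M = al * \<bar>a\<bar> + al * \<bar>b\<bar>" unfolding M_def by (simp add: distrib_left)
      ultimately have "x \<le> M" "- x \<le> M" using x by linarith+
      then show ?thesis by (rule abs_leI)
    qed
    then have "\<bar>x\<bar> \<le> \<bar>M\<bar>" by linarith
    then have "x\<^sup>2 \<le> M\<^sup>2" using abs_le_square_iff by blast
    then show "std_normal_density M \<le> std_normal_density x" by (rule phi_mono_sq)
  qed
  moreover have "0 < (- al * a - - al * b) * std_normal_density M"
    using assms al_pos phi_pos by (simp add: algebra_simps)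
  ultimately show ?thesis using Psi_diff[of a b] assms by simp
qed

end

context eqs begin
lemma Psi_cont: "continuous_on UNIV Psi"
proof (rule lipschitz_on_continuous_on)
  show "al-lipschitz_on UNIV Psi"
  proof (rule lipschitz_onI)
    fix x y :: real
    show "dist (Psi x) (Psi y) \<le> al * dist x y"
    proof (cases "x \<le> y")
      case True
      then show ?thesis using Psi_lip[of x y] Psi_mono[of x y]
        by (simp add: dist_real_def abs_if)
    next
      case False
      then show ?thesis using Psi_lip[of y x] Psi_mono[of y x]
        by (simp add: dist_real_def abs_if)
    qed
  qed (use al_pos in simp)
qed

lemma G_cont: "continuous_on UNIV G"
  unfolding G_def by (intro continuous_intros Psi_cont)

lemma G_cont_on: "continuous_on S G"
  using G_cont continuous_on_subset by blast

lemma G_root_bounds: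
  assumes "G u = s"
  shows "- s \<le> u" "u \<le> 1 - s"
  using assms Psi_nonneg[of u] Psi_le1[of u] by (auto simp: G_def)

lemma G_upper: "G u \<le> 1 - u" using Psi_le1[of u] by (simp add: G_def)
lemma G_lower: "- u \<le> G u" using Psi_nonneg[of u] by (simp add: G_def)

end

context eqs begin
definition R :: "real \<Rightarrow> real set" where "R s = {u. G u = s}"

lemma R_nonempty: "R s \<noteq> {}"
proof -
  have "\<exists>x. - s \<le> x \<and> x \<le> 1 - s \<and> G x = s"
    by (rule IVT2') (use G_upper[of "1 - s"] G_lower[of "- s"] G_cont_on in auto)
  then show ?thesis by (auto simp: R_def)
qed

lemma R_closed: "closed (R s)"
  unfolding R_def by (rule closed_Collect_eq) (auto intro: G_cont)

lemma R_bdd_above: "bdd_above (R s)"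
  unfolding R_def by (rule bdd_aboveI[where M="1 - s"]) (use G_root_bounds in auto)

lemma R_bdd_below: "bdd_below (R s)"
  unfolding R_def by (rule bdd_belowI[where m="- s"]) (use G_root_bounds in auto)

definition umax :: "real \<Rightarrow> real" where "umax s = Sup (R s)"
definition umin :: "real \<Rightarrow> real" where "umin s = Inf (R s)"

lemma umax_in: "G (umax s) = s"
  using closed_contains_Sup[OF R_nonempty R_bdd_above R_closed]
  by (simp add: umax_def R_def)

lemma umin_in: "G (umin s) = s"
  using closed_contains_Inf[OF R_nonempty R_bdd_below R_closed]
  by (simp add: umin_def R_def)

lemma umax_ge:
  assumes "G x = s" shows "x \<le> umax s"
proof -
  have "x \<in> R s" using assms by (simp add: R_def)
  then show ?thesis unfolding umax_def using R_bdd_above by (rule cSup_upper)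
qed

lemma umin_le:
  assumes "G x = s" shows "umin s \<le> x"
proof -
  have "x \<in> R s" using assms by (simp add: R_def)
  then show ?thesis unfolding umin_def using R_bdd_below by (rule cInf_lower)
qed

lemma umax_anti:
  assumes "s < s'"
  shows "umax s' \<le> umax s"
proof (rule ccontr)
  assume H: "\<not> umax s' \<le> umax s"
  define p where "p = umax s'"
  define b where "b = max p (2 - s)"
  have "\<exists>x. p \<le> x \<and> x \<le> b \<and> G x = s"
  proof (rule IVT2')
    show "G b \<le> s" using G_upper[of b] unfolding b_def by linarith
    show "s \<le> G p" using umax_in[of s'] assms p_def by simp
  qed (auto simp: b_def G_cont_on)
  then obtain x where "p \<le> x" "G x = s" by blast
  then show False using umax_ge[of x s] H p_def by simp
qed

lemma umin_anti:
  assumes "s < s'"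
  shows "umin s' \<le> umin s"
proof (rule ccontr)
  assume H: "\<not> umin s' \<le> umin s"
  define p where "p = umin s"
  define a where "a = min p (- s' - 1)"
  have "\<exists>x. a \<le> x \<and> x \<le> p \<and> G x = s'"
  proof (rule IVT2')
    show "s' \<le> G a" using G_lower[of a] unfolding a_def by linarith
    show "G p \<le> s'" using umin_in[of s] assms p_def by simp
  qed (auto simp: a_def G_cont_on)
  then obtain x where "x \<le> p" "G x = s'" by blast
  then show False using umin_le[of x s'] H p_def by simp
qed

lemma anti_meas:
  fixes f :: "real \<Rightarrow> real"
  assumes "\<And>s s'. s < s' \<Longrightarrow> f s' \<le> f s"
  shows "f \<in> borel_measurable borel"
proof -
  have "mono (\<lambda>s. - f s)"
    unfolding mono_def using assms by (metis less_eq_real_def neg_le_iff_le)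
  then have "(\<lambda>s. - f s) \<in> borel_measurable borel" by (rule borel_measurable_mono)
  then have "(\<lambda>s. - (- f s)) \<in> borel_measurable borel" by measurable
  then show ?thesis by simp
qed

lemma umax_meas: "umax \<in> borel_measurable borel"
  by (rule anti_meas) (rule umax_anti)

lemma umin_meas: "umin \<in> borel_measurable borel"
  by (rule anti_meas) (rule umin_anti)

lemma exists_h: "\<exists>h>0. h < Psi h - Psi 0"
proof -
  define r where "r = sqrt (2 * pi) / al"
  have r0: "0 < r" using al_pos by (simp add: r_def)
  have r1: "r < 1"
  proof -
    have "sqrt (2 * pi) * \<sigma> < 1 / \<sigma> * \<sigma>" using big sg0 by (rule mult_strict_right_mono)
    then show ?thesis using sg0 by (simp add: r_def al_def)
  qed
  define x where "x = sqrt (- ln r)"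
  have lnr: "ln r < 0" using r0 r1 by simp
  have x0: "0 < x" using lnr by (simp add: x_def)
  have xsq: "x\<^sup>2 = - ln r" using lnr by (simp add: x_def)
  have "exp (- x\<^sup>2 / 2) = exp (1/2 * ln r)" using xsq by simp
  also have "\<dots> = r powr (1/2)" using r0 by (simp add: powr_def)
  also have "\<dots> = sqrt r" using r0 by (simp add: powr_half_sqrt)
  finally have ex: "exp (- x\<^sup>2 / 2) = sqrt r" .
  have ephi: "std_normal_density x = sqrt r / sqrt (2 * pi)"
    unfolding std_normal_density_def ex by simp
  have "sqrt r > r"
  proof -
    have s1: "sqrt r < 1" using r0 r1 by simp
    have "r = sqrt r * sqrt r" using r0 by simp
    also have "\<dots> < sqrt r * 1" using s1 r0 by (intro mult_strict_left_mono) auto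
    finally show ?thesis by simp
  qed
  then have "std_normal_density x > r / sqrt (2 * pi)"
    unfolding ephi by (intro divide_strict_right_mono) auto
  moreover have "r / sqrt (2 * pi) = 1 / al" using al_pos by (simp add: r_def)
  ultimately have phx: "std_normal_density x > 1 / al" by simp
  define h where "h = x / al"
  have h0: "0 < h" using x0 al_pos by (simp add: h_def)
  have "(- al * 0 - - al * h) * std_normal_density x \<le> measure NN {- al * h ..< - al * 0}"
  proof (rule Ico_lower)
    show "- al * h \<le> - al * 0" using h0 al_pos by simp
    fix y assume "- al * h \<le> y" "y \<le> - al * 0"
    moreover have "al * h = x" using al_pos by (simp add: h_def)
    ultimately have "\<bar>y\<bar> \<le> \<bar>x\<bar>" using x0 by linarith
    then have "y\<^sup>2 \<le> x\<^sup>2" by (simp add: abs_le_square_iff)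
    then show "std_normal_density x \<le> std_normal_density y" by (rule phi_mono_sq)
  qed
  then have "x * std_normal_density x \<le> Psi h - Psi 0"
    using Psi_diff[of 0 h] h0 al_pos by (simp add: h_def)
  moreover have "h < x * std_normal_density x"
    using phx x0 al_pos unfolding h_def by (simp add: field_simps)
  ultimately show ?thesis using h0 by force
qed

end


lemma pos_int_lborel:
  fixes f :: "real \<Rightarrow> real"
  assumes fi: "integrable lborel f" and nn: "\<And>s. 0 \<le> f s" and pos: "\<And>s. s \<noteq> p \<Longrightarrow> 0 < f s"
  shows "0 < integral\<^sup>L lborel f"
proof -
  have ge: "0 \<le> integral\<^sup>L lborel f" by (rule integral_nonneg_AE) (simp add: nn)
  have "integral\<^sup>L lborel f \<noteq> 0"
  proof
    assume "integral\<^sup>L lborel f = 0"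
    then have "AE s in lborel. f s = 0"
      using integral_nonneg_eq_0_iff_AE[OF fi] nn by simp
    then have "AE s in (lborel::real measure). False"
      using AE_lborel_singleton[of p]
    proof eventually_elim
      case (elim s) then show ?case using pos[of s] by simp
    qed
    then show False using not_AE_False_lborel by simp
  qed
  then show ?thesis using ge by simp
qed

context eqs begin

lemma Psi_meas[measurable]: "Psi \<in> borel_measurable borel"
  by (rule borel_measurable_continuous_onI) (rule Psi_cont)

lemma phi_id:
  "std_normal_density (al * (w - u)) = std_normal_density (al * (0 - u)) * exp (al\<^sup>2 * w * u - al\<^sup>2 * w\<^sup>2 / 2)"
proof -
  have e: "- (al * (w - u))\<^sup>2 / 2 = - (al * (0 - u))\<^sup>2 / 2 + (al\<^sup>2 * w * u - al\<^sup>2 * w\<^sup>2 / 2)"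
    by (simp add: power2_eq_square field_simps)
  show ?thesis unfolding std_normal_density_def e exp_add by simp
qed

end

locale sel = eqs +
  fixes v :: "real \<Rightarrow> real"
  assumes vG: "\<And>s. G (v s) = s" and vm[measurable]: "v \<in> borel_measurable borel"
begin

lemma vb: "- s \<le> v s" "v s \<le> 1 - s"
  using G_root_bounds[OF vG[of s]] by auto

lemma Psi_v: "Psi (v s) = s + v s"
  using vG[of s] by (simp add: G_def)

lemma h_bound:
  "std_normal_density (al * (w - v s)) \<le>
     exp (al\<^sup>2 / 2) * std_normal_density (al / sqrt 2 * w + al / sqrt 2 * s)"
proof -
  define x where "x = al * (w - v s)"
  define a where "a = al * (w + s)"
  define d where "d = a - x"
  have d_eq: "d = al * (v s + s)" by (simp add: d_def a_def x_def algebra_simps)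
  have "0 \<le> v s + s" "v s + s \<le> 1" using vb[of s] by auto
  then have d0: "0 \<le> d" and d1: "d \<le> al" using al_pos unfolding d_eq
    by (auto intro: mult_nonneg_nonneg mult_left_le)
  have dsq: "d\<^sup>2 \<le> al\<^sup>2" using power_mono[OF d1 d0, of 2] by simp
  have "a\<^sup>2 \<le> 2 * x\<^sup>2 + 2 * d\<^sup>2"
  proof -
    have "0 \<le> (x - d)\<^sup>2" by simp
    moreover have "a = x + d" by (simp add: d_def)
    ultimately show ?thesis by (simp add: power2_eq_square algebra_simps)
  qed
  then have le: "- x\<^sup>2 / 2 \<le> al\<^sup>2 / 2 + - (a / sqrt 2)\<^sup>2 / 2"
    using dsq by (simp add: power_divide)
  have arg: "al / sqrt 2 * w + al / sqrt 2 * s = a / sqrt 2"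
    by (simp add: a_def add_divide_distrib algebra_simps)
  have "exp (- x\<^sup>2 / 2) \<le> exp (al\<^sup>2 / 2) * exp (- (a / sqrt 2)\<^sup>2 / 2)"
    using le by (simp add: exp_add[symmetric])
  then show ?thesis unfolding arg std_normal_density_def x_def[symmetric]
    by (simp add: divide_right_mono)
qed

lemma int_h: "integrable lborel (\<lambda>s. std_normal_density (al * (w - v s)))"
proof (rule Bochner_Integration.integrable_bound)
  have "integrable lborel (\<lambda>s. std_normal_density (al / sqrt 2 * w + al / sqrt 2 * s))"
  proof (rule lborel_integrable_real_affine[OF integrable_normal_density])
    show "al / sqrt 2 \<noteq> 0" using al_pos by auto
  qed simp
  then show "integrable lborel (\<lambda>s. exp (al\<^sup>2 / 2) * std_normal_density (al / sqrt 2 * w + al / sqrt 2 * s))"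
    by (rule integrable_mult_right)
  show "(\<lambda>s. std_normal_density (al * (w - v s))) \<in> borel_measurable lborel" by measurable
  show "AE s in lborel. norm (std_normal_density (al * (w - v s)))
          \<le> norm (exp (al\<^sup>2 / 2) * std_normal_density (al / sqrt 2 * w + al / sqrt 2 * s))"
    using h_bound by simp
qed

definition Nm :: "real \<Rightarrow> real \<Rightarrow> real" where
  "Nm k w = (\<integral>s. indicator {s. k < v s} s * std_normal_density (al * (w - v s)) \<partial>lborel)"
definition Dn :: "real \<Rightarrow> real" where
  "Dn w = (\<integral>s. std_normal_density (al * (w - v s)) \<partial>lborel)"
definition Fk :: "real \<Rightarrow> real \<Rightarrow> real" where
  "Fk k w = (\<integral>s. (indicator {s. k < v s} s - c) * std_normal_density (al * (w - v s)) \<partial>lborel)"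

lemma int_ind: "integrable lborel (\<lambda>s. indicator {s. k < v s} s * std_normal_density (al * (w - v s)))"
proof -
  have "integrable lborel (\<lambda>s. std_normal_density (al * (w - v s)) * indicator {s. k < v s} s)"
    by (rule integrable_real_mult_indicator) (auto intro: int_h)
  then show ?thesis by (simp add: mult.commute)
qed

lemma int_F: "integrable lborel (\<lambda>s. (indicator {s. k < v s} s - c) * std_normal_density (al * (w - v s)))"
proof -
  have "integrable lborel (\<lambda>s. indicator {s. k < v s} s * std_normal_density (al * (w - v s))
           - c * std_normal_density (al * (w - v s)))"
    by (intro Bochner_Integration.integrable_diff integrable_mult_right int_ind int_h)
  then show ?thesis by (simp add: algebra_simps)
qed

lemma Fk_eq: "Fk k w = Nm k w - c * Dn w"
proof -
  have "Fk k w = (\<integral>s. indicator {s. k < v s} s * std_normal_density (al * (w - v s))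
           - c * std_normal_density (al * (w - v s)) \<partial>lborel)"
    unfolding Fk_def by (simp add: algebra_simps)
  also have "\<dots> = Nm k w - c * Dn w"
    unfolding Nm_def Dn_def
    by (subst Bochner_Integration.integral_diff) (auto intro: int_ind int_h)
  finally show ?thesis .
qed

lemma Dn_pos: "0 < Dn w"
  unfolding Dn_def by (rule pos_int_lborel[OF int_h]) (auto intro: less_imp_le phi_pos)

end


context sel begin

lemma v_ne:
  assumes "s \<noteq> G k" shows "v s \<noteq> k"
  using assms vG[of s] by auto

lemma sign_pos:
  assumes w: "0 < w" and uk: "v s \<noteq> k"
  shows "0 < (indicator {s. k < v s} s - c) * (exp (al\<^sup>2 * w * v s - al\<^sup>2 * w\<^sup>2 / 2) - exp (al\<^sup>2 * w * k - al\<^sup>2 * w\<^sup>2 / 2))"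
proof -
  have aw: "0 < al\<^sup>2 * w" using al_pos w by simp
  show ?thesis
  proof (cases "k < v s")
    case True
    then have "al\<^sup>2 * w * k < al\<^sup>2 * w * v s" using aw by (intro mult_strict_left_mono)
    then have "exp (al\<^sup>2 * w * k - al\<^sup>2 * w\<^sup>2 / 2) < exp (al\<^sup>2 * w * v s - al\<^sup>2 * w\<^sup>2 / 2)" by simp
    moreover have "indicator {s. k < v s} s = (1::real)" using True by simp
    ultimately show ?thesis using c1 by (intro mult_pos_pos) auto
  next
    case False
    then have "v s < k" using uk by simp
    then have "al\<^sup>2 * w * v s < al\<^sup>2 * w * k" using aw by (intro mult_strict_left_mono)
    then have "exp (al\<^sup>2 * w * v s - al\<^sup>2 * w\<^sup>2 / 2) < exp (al\<^sup>2 * w * k - al\<^sup>2 * w\<^sup>2 / 2)" by simp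
    moreover have "indicator {s. k < v s} s = (0::real)" using False by simp
    ultimately show ?thesis using c0 by (intro mult_neg_neg) auto
  qed
qed

lemma sign_neg:
  assumes w: "w < 0" and uk: "v s \<noteq> k"
  shows "(indicator {s. k < v s} s - c) * (exp (al\<^sup>2 * w * v s - al\<^sup>2 * w\<^sup>2 / 2) - exp (al\<^sup>2 * w * k - al\<^sup>2 * w\<^sup>2 / 2)) < 0"
proof -
  have aw: "0 < al\<^sup>2 * (- w)" using al_pos w by (intro mult_pos_pos) auto
  show ?thesis
  proof (cases "k < v s")
    case True
    then have "al\<^sup>2 * (- w) * k < al\<^sup>2 * (- w) * v s" using aw by (intro mult_strict_left_mono)
    then have "exp (al\<^sup>2 * w * v s - al\<^sup>2 * w\<^sup>2 / 2) < exp (al\<^sup>2 * w * k - al\<^sup>2 * w\<^sup>2 / 2)" by simp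
    moreover have "indicator {s. k < v s} s = (1::real)" using True by simp
    ultimately show ?thesis using c1 by (intro mult_pos_neg) auto
  next
    case False
    then have "v s < k" using uk by simp
    then have "al\<^sup>2 * (- w) * v s < al\<^sup>2 * (- w) * k" using aw by (intro mult_strict_left_mono)
    then have "exp (al\<^sup>2 * w * k - al\<^sup>2 * w\<^sup>2 / 2) < exp (al\<^sup>2 * w * v s - al\<^sup>2 * w\<^sup>2 / 2)" by simp
    moreover have "indicator {s. k < v s} s = (0::real)" using False by simp
    ultimately show ?thesis using c0 by (intro mult_neg_pos) auto
  qed
qed

lemma cross:
  assumes F0: "Fk k 0 = 0"
  shows "0 \<le> Fk k w \<longleftrightarrow> 0 \<le> w"
proof -
  define E where "E = exp (al\<^sup>2 * w * k - al\<^sup>2 * w\<^sup>2 / 2)"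
  define h0 where "h0 s = std_normal_density (al * (0 - v s))" for s
  define X where "X s = exp (al\<^sup>2 * w * v s - al\<^sup>2 * w\<^sup>2 / 2)" for s
  define d where "d s = h0 s * ((indicator {s. k < v s} s - c) * (X s - E))" for s
  have deq: "d s = (indicator {s. k < v s} s - c) * std_normal_density (al * (w - v s))
      - E * ((indicator {s. k < v s} s - c) * std_normal_density (al * (0 - v s)))" for s
    unfolding d_def h0_def X_def phi_id[of w "v s"] by (simp add: algebra_simps)
  have dint: "integrable lborel d"
    unfolding deq by (intro Bochner_Integration.integrable_diff integrable_mult_right int_F)
  have Fd: "Fk k w = integral\<^sup>L lborel d"
  proof -
    have i1: "integrable lborel (\<lambda>s. (indicator {s. k < v s} s - c) * std_normal_density (al * (w - v s)))"
      by (rule int_F)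
    have i2: "integrable lborel (\<lambda>s. E * ((indicator {s. k < v s} s - c) * std_normal_density (al * (0 - v s))))"
      by (rule integrable_mult_right, rule int_F)
    have "integral\<^sup>L lborel d = (\<integral>s. (indicator {s. k < v s} s - c) * std_normal_density (al * (w - v s)) \<partial>lborel)
       - (\<integral>s. E * ((indicator {s. k < v s} s - c) * std_normal_density (al * (0 - v s))) \<partial>lborel)"
      unfolding deq by (rule Bochner_Integration.integral_diff[OF i1 i2])
    also have "\<dots> = Fk k w - E * Fk k 0" unfolding Fk_def by simp
    finally have "integral\<^sup>L lborel d = Fk k w - E * Fk k 0" .
    then show ?thesis using F0 by simp
  qed
  have h0pos: "0 < h0 s" for s unfolding h0_def by (rule phi_pos)
  have XE: "v s = k \<Longrightarrow> X s = E" for s by (simp add: X_def E_def)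
  show ?thesis
  proof (cases w "0::real" rule: linorder_cases)
    case less
    have "0 < integral\<^sup>L lborel (\<lambda>s. - d s)"
    proof (rule pos_int_lborel[where p="G k"])
      show "integrable lborel (\<lambda>s. - d s)" using dint by simp
      show "0 \<le> - d s" for s
      proof (cases "v s = k")
        case True then show ?thesis using XE by (simp add: d_def)
      next
        case False
        then show ?thesis unfolding d_def X_def E_def
          using sign_neg[OF less False] h0pos[of s]
          by (simp add: mult_pos_neg less_imp_le)
      qed
      show "0 < - d s" if "s \<noteq> G k" for s
        unfolding d_def X_def E_def
        using sign_neg[OF less v_ne[OF that]] h0pos[of s]
        by (simp add: mult_pos_neg)
    qed
    then show ?thesis using Fd less by simp
  next
    case equal then show ?thesis using F0 by simp
  next
    case greater
    have "0 < integral\<^sup>L lborel d"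
    proof (rule pos_int_lborel[where p="G k"])
      show "integrable lborel d" by (rule dint)
      show "0 \<le> d s" for s
      proof (cases "v s = k")
        case True then show ?thesis using XE by (simp add: d_def)
      next
        case False
        then show ?thesis unfolding d_def X_def E_def
          using sign_pos[OF greater False] h0pos[of s]
          by (simp add: less_imp_le)
      qed
      show "0 < d s" if "s \<noteq> G k" for s
        unfolding d_def X_def E_def
        using sign_pos[OF greater v_ne[OF that]] h0pos[of s]
        by simp
    qed
    then show ?thesis using Fd greater by simp
  qed
qed

end


context sel begin

lemma ind_bound: "norm ((indicator {s. k < v s} s - c) * std_normal_density (al * (0 - v s)))
   \<le> std_normal_density (al * (0 - v s))"
proof -
  have "\<bar>indicator {s. k < v s} s - c\<bar> \<le> 1" using c0 c1 by (auto simp: indicator_def)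
  then show ?thesis
    by (simp add: abs_mult mult_left_le_one_le)
qed

lemma K_cont: "isCont (\<lambda>k. Fk k 0) k0"
proof (rule continuous_at_sequentiallyI)
  fix u :: "nat \<Rightarrow> real" assume u: "u \<longlonglongrightarrow> k0"
  show "(\<lambda>n. Fk (u n) 0) \<longlonglongrightarrow> Fk k0 0"
    unfolding Fk_def
  proof (rule integral_dominated_convergence[where w="\<lambda>s. std_normal_density (al * (0 - v s))"])
    show "integrable lborel (\<lambda>s. std_normal_density (al * (0 - v s)))" by (rule int_h)
    show "AE s in lborel. norm ((indicator {s. u n < v s} s - c) * std_normal_density (al * (0 - v s)))
        \<le> std_normal_density (al * (0 - v s))" for n
      using ind_bound by simp
    show "AE s in lborel. (\<lambda>n. (indicator {s. u n < v s} s - c) * std_normal_density (al * (0 - v s)))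
        \<longlonglongrightarrow> (indicator {s. k0 < v s} s - c) * std_normal_density (al * (0 - v s))"
      using AE_lborel_singleton[of "G k0"]
    proof eventually_elim
      case (elim s)
      then have ne: "v s \<noteq> k0" by (rule v_ne)
      show ?case
      proof (rule tendsto_eventually)
        show "\<forall>\<^sub>F n in sequentially. (indicator {s. u n < v s} s - c) * std_normal_density (al * (0 - v s))
            = (indicator {s. k0 < v s} s - c) * std_normal_density (al * (0 - v s))"
        proof (cases "k0 < v s")
          case True
          have "\<forall>\<^sub>F n in sequentially. u n < v s" by (rule order_tendstoD(2)[OF u True])
          then show ?thesis by eventually_elim (use True in simp)
        next
          case False
          then have "v s < k0" using ne by simp
          have "\<forall>\<^sub>F n in sequentially. v s < u n" by (rule order_tendstoD(1)[OF u \<open>v s < k0\<close>])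
          then show ?thesis by eventually_elim (use False in simp)
        qed
      qed
    qed
  qed measurable
qed

lemma K_top: "(\<lambda>n. Fk (real n) 0) \<longlonglongrightarrow> - c * Dn 0"
proof -
  have "(\<lambda>n. Fk (real n) 0) \<longlonglongrightarrow> (\<integral>s. (0 - c) * std_normal_density (al * (0 - v s)) \<partial>lborel)"
    unfolding Fk_def
  proof (rule integral_dominated_convergence[where w="\<lambda>s. std_normal_density (al * (0 - v s))"])
    show "integrable lborel (\<lambda>s. std_normal_density (al * (0 - v s)))" by (rule int_h)
    show "AE s in lborel. norm ((indicator {s. real n < v s} s - c) * std_normal_density (al * (0 - v s)))
        \<le> std_normal_density (al * (0 - v s))" for n
      using ind_bound by simp
    show "AE s in lborel. (\<lambda>n. (indicator {s. real n < v s} s - c) * std_normal_density (al * (0 - v s)))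
        \<longlonglongrightarrow> (0 - c) * std_normal_density (al * (0 - v s))"
    proof (rule AE_I2, rule tendsto_eventually)
      fix s
      obtain N :: nat where N: "v s < real N" using reals_Archimedean2 by blast
      show "\<forall>\<^sub>F n in sequentially. (indicator {s. real n < v s} s - c) * std_normal_density (al * (0 - v s))
            = (0 - c) * std_normal_density (al * (0 - v s))"
        unfolding eventually_sequentially
      proof (intro exI allI impI)
        fix n assume "N \<le> n"
        then have "real N \<le> real n" by simp
        then have "v s < real n" using N by linarith
        then show "(indicator {s. real n < v s} s - c) * std_normal_density (al * (0 - v s))
            = (0 - c) * std_normal_density (al * (0 - v s))" by simp
      qed
    qed
  qed measurable
  then show ?thesis unfolding Dn_def by simp
qed

lemma K_bot: "(\<lambda>n. Fk (- real n) 0) \<longlonglongrightarrow> (1 - c) * Dn 0"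
proof -
  have "(\<lambda>n. Fk (- real n) 0) \<longlonglongrightarrow> (\<integral>s. (1 - c) * std_normal_density (al * (0 - v s)) \<partial>lborel)"
    unfolding Fk_def
  proof (rule integral_dominated_convergence[where w="\<lambda>s. std_normal_density (al * (0 - v s))"])
    show "integrable lborel (\<lambda>s. std_normal_density (al * (0 - v s)))" by (rule int_h)
    show "AE s in lborel. norm ((indicator {s. - real n < v s} s - c) * std_normal_density (al * (0 - v s)))
        \<le> std_normal_density (al * (0 - v s))" for n
      using ind_bound by simp
    show "AE s in lborel. (\<lambda>n. (indicator {s. - real n < v s} s - c) * std_normal_density (al * (0 - v s)))
        \<longlonglongrightarrow> (1 - c) * std_normal_density (al * (0 - v s))"
    proof (rule AE_I2, rule tendsto_eventually)
      fix s
      obtain N :: nat where N: "- v s < real N" using reals_Archimedean2 by blast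
      show "\<forall>\<^sub>F n in sequentially. (indicator {s. - real n < v s} s - c) * std_normal_density (al * (0 - v s))
            = (1 - c) * std_normal_density (al * (0 - v s))"
        unfolding eventually_sequentially
      proof (intro exI allI impI)
        fix n assume "N \<le> n"
        then have "real N \<le> real n" by simp
        then have "- v s < real n" using N by linarith
        then show "(indicator {s. - real n < v s} s - c) * std_normal_density (al * (0 - v s))
            = (1 - c) * std_normal_density (al * (0 - v s))" by simp
      qed
    qed
  qed measurable
  then show ?thesis unfolding Dn_def by simp
qed

lemma exists_k: "\<exists>k. Fk k 0 = 0"
proof -
  have "\<forall>\<^sub>F n in sequentially. Fk (real n) 0 < 0"
    using order_tendstoD(2)[OF K_top] Dn_pos[of 0] c0 by simp
  moreover have "\<forall>\<^sub>F n in sequentially. 0 < Fk (- real n) 0"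
    using order_tendstoD(1)[OF K_bot] Dn_pos[of 0] c1 by simp
  ultimately have "\<forall>\<^sub>F n in sequentially. Fk (real n) 0 < 0 \<and> 0 < Fk (- real n) 0"
    by (rule eventually_conj)
  then obtain n where n: "Fk (real n) 0 < 0" "0 < Fk (- real n) 0"
    unfolding eventually_sequentially by blast
  have "\<exists>x. - real n \<le> x \<and> x \<le> real n \<and> Fk x 0 = 0"
  proof (rule IVT2')
    show "continuous_on {- real n..real n} (\<lambda>k. Fk k 0)"
      by (intro continuous_at_imp_continuous_on ballI K_cont)
  qed (use n in auto)
  then show ?thesis by blast
qed

definition Aeq :: "real \<Rightarrow> real \<Rightarrow> real" where "Aeq k \<theta> = Psi (v (\<theta> - k))"

lemma Aeq_diff: "Aeq k t - t = v (t - k) - k"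
  using Psi_v[of "t - k"] by (simp add: Aeq_def)

lemma post:
  "posterior_success \<sigma> (Aeq k) z = Nm k (z + k) / Dn (z + k)"
proof -
  have ial: "1 / \<sigma> = al" by (simp add: al_def)
  have num: "(\<integral>t. indicator {t. Aeq k t - t > 0} t * std_normal_density ((1/\<sigma>) * (z - Aeq k t + t)) \<partial>lborel)
      = Nm k (z + k)"
  proof -
    have "Nm k (z + k) = (\<integral>t. indicator {s. k < v s} (- k + 1 * t) * std_normal_density (al * ((z + k) - v (- k + 1 * t))) \<partial>lborel)"
      unfolding Nm_def by (subst lborel_integral_real_affine[where c=1 and t="-k"]) simp_all
    also have "\<dots> = (\<integral>t. indicator {t. Aeq k t - t > 0} t * std_normal_density ((1/\<sigma>) * (z - Aeq k t + t)) \<partial>lborel)"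
    proof (rule Bochner_Integration.integral_cong[OF refl])
      fix t
      have "al * ((z + k) - v (- k + 1 * t)) = (1/\<sigma>) * (z - Aeq k t + t)"
      proof -
        have a: "Aeq k t = t + v (t - k) - k" using Aeq_diff[of k t] by linarith
        show ?thesis by (simp add: ial a algebra_simps)
      qed
      then have p: "std_normal_density (al * ((z + k) - v (- k + 1 * t))) = std_normal_density ((1/\<sigma>) * (z - Aeq k t + t))"
        by simp
      have i: "indicator {s. k < v s} (- k + 1 * t) = (indicator {t. Aeq k t - t > 0} t :: real)"
        using Aeq_diff[of k t] by (simp add: indicator_def)
      show "indicator {s. k < v s} (- k + 1 * t) * std_normal_density (al * ((z + k) - v (- k + 1 * t)))
          = indicator {t. Aeq k t - t > 0} t * std_normal_density ((1/\<sigma>) * (z - Aeq k t + t))"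
        by (simp only: i p)
    qed
    finally show ?thesis by simp
  qed
  have den: "(\<integral>t. std_normal_density ((1/\<sigma>) * (z - Aeq k t + t)) \<partial>lborel) = Dn (z + k)"
  proof -
    have "Dn (z + k) = (\<integral>t. std_normal_density (al * ((z + k) - v (- k + 1 * t))) \<partial>lborel)"
      unfolding Dn_def by (subst lborel_integral_real_affine[where c=1 and t="-k"]) simp_all
    also have "\<dots> = (\<integral>t. std_normal_density ((1/\<sigma>) * (z - Aeq k t + t)) \<partial>lborel)"
    proof (rule Bochner_Integration.integral_cong[OF refl])
      fix t
      have "al * ((z + k) - v (- k + 1 * t)) = (1/\<sigma>) * (z - Aeq k t + t)"
      proof -
        have a: "Aeq k t = t + v (t - k) - k" using Aeq_diff[of k t] by linarith
        show ?thesis by (simp add: ial a algebra_simps)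
      qed
      then show "std_normal_density (al * ((z + k) - v (- k + 1 * t)))
          = std_normal_density ((1/\<sigma>) * (z - Aeq k t + t))"
        by simp
    qed
    finally show ?thesis by simp
  qed
  show ?thesis unfolding posterior_success_def num den ..
qed

lemma attack:
  assumes F0: "Fk k 0 = 0"
  shows "attack_set \<sigma> c (Aeq k) \<theta> = {- al * v (\<theta> - k)..}"
proof -
  have "\<xi> \<in> attack_set \<sigma> c (Aeq k) \<theta> \<longleftrightarrow> - al * v (\<theta> - k) \<le> \<xi>" for \<xi>
  proof -
    define w where "w = v (\<theta> - k) + \<sigma> * \<xi>"
    have zw: "Aeq k \<theta> - \<theta> + \<sigma> * \<xi> + k = w" using Aeq_diff[of k \<theta>] by (simp add: w_def)
    have "\<xi> \<in> attack_set \<sigma> c (Aeq k) \<theta> \<longleftrightarrow> c \<le> posterior_success \<sigma> (Aeq k) (Aeq k \<theta> - \<theta> + \<sigma> * \<xi>)"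
      by (simp add: attack_set_def)
    also have "\<dots> \<longleftrightarrow> c \<le> Nm k w / Dn w" by (simp only: post zw)
    also have "\<dots> \<longleftrightarrow> c * Dn w \<le> Nm k w" using Dn_pos[of w] by (simp add: pos_le_divide_eq)
    also have "\<dots> \<longleftrightarrow> 0 \<le> Fk k w" by (simp add: Fk_eq)
    also have "\<dots> \<longleftrightarrow> 0 \<le> w" by (rule cross[OF F0])
    also have "\<dots> \<longleftrightarrow> - al * v (\<theta> - k) \<le> \<xi>"
    proof -
      have "0 \<le> w \<longleftrightarrow> - v (\<theta> - k) \<le> \<sigma> * \<xi>" unfolding w_def by linarith
      also have "\<dots> \<longleftrightarrow> - v (\<theta> - k) / \<sigma> \<le> \<xi>" by (subst pos_divide_le_eq[OF sg0]) (simp add: mult.commute)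
      finally show ?thesis by (simp add: al_def)
    qed
    finally show ?thesis .
  qed
  then show ?thesis by auto
qed

lemma sel_eq: "\<exists>k. is_equilibrium \<sigma> c (\<lambda>\<theta>. Psi (v (\<theta> - k)))"
proof -
  obtain k where F0: "Fk k 0 = 0" using exists_k by blast
  have A: "(\<lambda>\<theta>. Psi (v (\<theta> - k))) = Aeq k" by (simp add: Aeq_def fun_eq_iff)
  have "is_equilibrium \<sigma> c (Aeq k)"
    unfolding is_equilibrium_def attack_mass_def
  proof (intro conjI allI)
    show "Aeq k \<in> borel_measurable borel" unfolding Aeq_def by measurable
    show "0 \<le> Aeq k \<theta>" for \<theta> by (simp add: Aeq_def Psi_nonneg)
    show "Aeq k \<theta> \<le> 1" for \<theta> by (simp add: Aeq_def Psi_le1)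
    show "attack_set \<sigma> c (Aeq k) \<theta> \<in> sets borel" for \<theta> unfolding attack[OF F0] by simp
    show "Aeq k \<theta> = measure (density lborel std_normal_density) (attack_set \<sigma> c (Aeq k) \<theta>)" for \<theta>
      unfolding attack[OF F0] by (simp add: Aeq_def Psi_def NN_def)
  qed
  then show ?thesis by (intro exI[of _ k]) (simp only: A)
qed

end

context eqs begin

lemma Psi_inj:
  assumes "Psi a = Psi b" shows "a = b"
proof (rule ccontr)
  assume "a \<noteq> b"
  then have "a < b \<or> b < a" by linarith
  then show False using Psi_strict[of a b] Psi_strict[of b a] assms by auto
qed

lemma main: "\<exists>A1 A2. A1 \<noteq> A2 \<and> is_equilibrium \<sigma> c A1 \<and> is_equilibrium \<sigma> c A2"
proof -
  interpret s1: sel \<sigma> c umax by unfold_locales (rule umax_in, rule umax_meas)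
  interpret s2: sel \<sigma> c umin by unfold_locales (rule umin_in, rule umin_meas)
  obtain k1 where e1: "is_equilibrium \<sigma> c (\<lambda>\<theta>. Psi (umax (\<theta> - k1)))" using s1.sel_eq by blast
  obtain k2 where e2: "is_equilibrium \<sigma> c (\<lambda>\<theta>. Psi (umin (\<theta> - k2)))" using s2.sel_eq by blast
  obtain h where h0: "0 < h" and hh: "h < Psi h - Psi 0" using exists_h by blast
  define s0 where "s0 = G 0"
  have Gh: "s0 \<le> G h" using hh by (simp add: s0_def G_def)
  have m1: "umin s0 \<le> 0" by (rule umin_le) (simp add: s0_def)
  define b where "b = max h (2 - s0)"
  have "\<exists>x. h \<le> x \<and> x \<le> b \<and> G x = s0"
  proof (rule IVT2')
    show "G b \<le> s0" using G_upper[of b] unfolding b_def by linarith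
    show "s0 \<le> G h" by (rule Gh)
    show "h \<le> b" unfolding b_def by linarith
    show "continuous_on {h..b} G" by (rule G_cont_on)
  qed
  then obtain x where x: "h \<le> x" "G x = s0" by blast
  have m2: "0 < umax s0" using umax_ge[OF x(2)] x(1) h0 by linarith
  have ne: "(\<lambda>\<theta>. Psi (umax (\<theta> - k1))) \<noteq> (\<lambda>\<theta>. Psi (umin (\<theta> - k2)))"
  proof
    assume eq: "(\<lambda>\<theta>. Psi (umax (\<theta> - k1))) = (\<lambda>\<theta>. Psi (umin (\<theta> - k2)))"
    have eqt: "umax (\<theta> - k1) = umin (\<theta> - k2)" for \<theta>
    proof (rule Psi_inj)
      show "Psi (umax (\<theta> - k1)) = Psi (umin (\<theta> - k2))" using fun_cong[OF eq, of \<theta>] by simp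
    qed
    have "0 - k1 = G (umax (0 - k1))" by (rule umax_in[symmetric])
    also have "\<dots> = G (umin (0 - k2))" by (simp only: eqt)
    also have "\<dots> = 0 - k2" by (rule umin_in)
    finally have "k1 = k2" by simp
    then have "umax s0 = umin s0" using eqt[of "s0 + k1"] by simp
    then show False using m1 m2 by simp
  qed
  show ?thesis using ne e1 e2 by blast
qed

end


theorem proposition5:
  fixes \<sigma> c :: real
  assumes "0 < c" and "c < 1" and "0 < \<sigma>"
    and "1 / \<sigma> > sqrt (2 * pi)"
  shows "\<exists>A1 A2. A1 \<noteq> A2 \<and> is_equilibrium \<sigma> c A1 \<and> is_equilibrium \<sigma> c A2"
proof -
  interpret eqs \<sigma> c using assms by unfold_locales
  show ?thesis by (rule main)
qed

end
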